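(* Let $p$ be an integer with $|p|>1$ and let $G=\mathbb{Z}[1/p]\rtimes\mathbb{Z}$ with multiplication $(f_1,c_1)(f_2,c_2)=(f_1+p^{-c_1}f_2,\,c_1+c_2)$. Let $C=\{(f_i,c_i)\}$ be a finite generating set of $G$ closed under inverses, let $c=\max\{c_i\mid (f_i,c_i)\in C\}$, and let $d_C$ be the word metric on $G$ with respect to $C$. Then there is a constant $M$ (depending on $p$ and $C$) such that for every $r\ge 0$ and all $h=(f,0)$, $h'=(f',0)$ in the subgroup $\mathbb{Z}[1/p]\times\{0\}\subset G$ with $d_C(h,h')\le r$, we have $\big||f|-|f'|\big|\le M|p|^{rc/2}$ and $|\mathrm{denom}(f)-\mathrm{denom}(f')|\le M|p|^{rc/2}$.
   Context: $G$ is isomorphic to the Baumslag-Solitar group $B_{1,p}=\langle a,t\mid t^{-1}at=a^p\rangle$. The word metric is $d_C(g,g')=$ the least number of elements of $C$ whose product equals $g^{-1}g'$. For $f\in\mathbb{Z}[1/p]$, $|f|$ is its usual absolute value, and $\mathrm{denom}(f)$ is $|p|^{n}$ where $n\ge 0$ is the least nonnegative integer such that $f=m/p^{n}$ for some integer $m$. *)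

theory Defs
  imports Complex_Main
begin

definition Zinvp :: "int \<Rightarrow> rat set" where
  "Zinvp p = {q. \<exists>m::int. \<exists>n::nat. q = of_int m / (of_int p) ^ n}"

definition BScarrier :: "int \<Rightarrow> (rat \<times> int) set" where
  "BScarrier p = Zinvp p \<times> UNIV"

definition BSmult :: "int \<Rightarrow> rat \<times> int \<Rightarrow> rat \<times> int \<Rightarrow> rat \<times> int" where
  "BSmult p g h = (fst g + ((of_int p) powi (- snd g)) * fst h, snd g + snd h)"

definition BSinv :: "int \<Rightarrow> rat \<times> int \<Rightarrow> rat \<times> int" where
  "BSinv p g = (- (((of_int p) powi (snd g)) * fst g), - snd g)"

definition BSone :: "rat \<times> int" where
  "BSone = (0, 0)"

definition BSprod :: "int \<Rightarrow> (rat \<times> int) list \<Rightarrow> rat \<times> int" where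
  "BSprod p xs = foldr (BSmult p) xs BSone"

text \<open>C generates G (as a monoid, C being closed under inverses).\<close>
definition BSgenerates :: "int \<Rightarrow> (rat \<times> int) set \<Rightarrow> bool" where
  "BSgenerates p C \<longleftrightarrow> (\<forall>g \<in> BScarrier p. \<exists>xs. set xs \<subseteq> C \<and> BSprod p xs = g)"

definition word_dist :: "int \<Rightarrow> (rat \<times> int) set \<Rightarrow> rat \<times> int \<Rightarrow> rat \<times> int \<Rightarrow> nat" where
  "word_dist p C g g' =
     (LEAST k. \<exists>xs. length xs = k \<and> set xs \<subseteq> C \<and> BSprod p xs = BSmult p (BSinv p g) g')"

definition denomp :: "int \<Rightarrow> rat \<Rightarrow> int" where
  "denomp p f = \<bar>p\<bar> ^ (LEAST n. \<exists>m::int. f = of_int m / (of_int p) ^ n)"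

end

theory Submission
  imports Defs
begin

fun FF :: "int \<Rightarrow> (rat \<times> int) list \<Rightarrow> rat" where
  "FF p [] = 0"
| "FF p (x # xs) = fst x + (of_int p) powi (- snd x) * FF p xs"

abbreviation SS :: "(rat \<times> int) list \<Rightarrow> int" where
  "SS xs \<equiv> sum_list (map snd xs)"

lemma BSprod_FF: "BSprod p xs = (FF p xs, SS xs)"
  by (induction xs) (auto simp: BSprod_def BSmult_def BSone_def)

lemma FF_append:
  assumes "p \<noteq> 0"
  shows "FF p (ys @ zs) = FF p ys + (of_int p) powi (- SS ys) * FF p zs"
proof (induction ys)
  case Nil then show ?case by simp
next
  case (Cons x ys)
  have "(of_int p :: rat) powi (- snd x) * (of_int p) powi (- SS ys) = (of_int p) powi (- SS (x # ys))"
    using assms by (simp add: power_int_add[symmetric])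
  then show ?case using Cons by (simp add: algebra_simps)
qed

definition rep :: "int \<Rightarrow> nat \<Rightarrow> rat \<Rightarrow> bool" where
  "rep p n f \<longleftrightarrow> (\<exists>m::int. f = of_int m / (of_int p) ^ n)"

lemma Zinvp_rep: "f \<in> Zinvp p \<longleftrightarrow> (\<exists>n. rep p n f)"
  unfolding Zinvp_def rep_def by auto

lemma rep_mono:
  assumes "p \<noteq> 0" "rep p n f" "n \<le> n'"
  shows "rep p n' f"
proof -
  obtain m where m: "f = of_int m / (of_int p) ^ n" using assms(2) rep_def by auto
  have "(of_int p :: rat) ^ n' = of_int p ^ n * of_int p ^ (n' - n)"
    using assms(3) by (simp add: power_add[symmetric])
  then have "f = of_int (m * p ^ (n' - n)) / (of_int p) ^ n'"
    using m assms(1) by (simp add: field_simps)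
  then show ?thesis unfolding rep_def by blast
qed

lemma rep_add:
  assumes "rep p n f" "rep p n g" shows "rep p n (f + g)"
proof -
  obtain m where m: "f = of_int m / (of_int p) ^ n" using assms(1) rep_def by auto
  obtain m' where m': "g = of_int m' / (of_int p) ^ n" using assms(2) rep_def by auto
  have "f + g = of_int (m + m') / (of_int p) ^ n" using m m' by (simp add: add_divide_distrib)
  then show ?thesis unfolding rep_def by blast
qed

lemma rep_uminus:
  assumes "rep p n f" shows "rep p n (- f)"
proof -
  obtain m where m: "f = of_int m / (of_int p) ^ n" using assms(1) rep_def by auto
  have "- f = of_int (- m) / (of_int p) ^ n" using m by simp
  then show ?thesis unfolding rep_def by blast
qed

lemma rep_powi:
  assumes "p \<noteq> 0" "rep p n f"
  shows "rep p (n + nat (- s)) ((of_int p) powi s * f)"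
proof -
  obtain m where m: "f = of_int m / (of_int p) ^ n" using assms(2) rep_def by auto
  show ?thesis
  proof (cases "s \<ge> 0")
    case True
    then obtain j where j: "s = int j" by (metis nonneg_eq_int)
    have "(of_int p) powi s * f = of_int (p ^ j * m) / (of_int p) ^ n"
      using m j by simp
    then have "rep p n ((of_int p) powi s * f)" unfolding rep_def by blast
    then show ?thesis using rep_mono assms(1) by fastforce
  next
    case False
    then obtain j where j: "s = - int j" "nat (- s) = j" by (metis add.inverse_inverse less_le nat_0_le neg_0_le_iff_le nat_int not_le)
    have "(of_int p :: rat) powi s * f = of_int m / (of_int p) ^ (n + j)"
      using m j assms(1) by (simp add: power_int_minus power_add field_simps)
    then show ?thesis unfolding rep_def using j by auto
  qed
qed


lemma powi_bound:
  fixes p :: int and c :: int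
  assumes "\<bar>p\<bar> > 1" "c \<ge> 0" "\<bar>s\<bar> \<le> c * int k"
  shows "\<bar>(of_int p :: rat) powi s\<bar> \<le> (of_int \<bar>p\<bar> ^ nat c) ^ k"
proof -
  have P1: "(1::rat) \<le> of_int \<bar>p\<bar>" using assms(1) by simp
  have rhs: "(of_int \<bar>p\<bar> ^ nat c :: rat) ^ k = of_int \<bar>p\<bar> ^ (nat c * k)"
    by (simp add: power_mult)
  have ge1: "(1::rat) \<le> of_int \<bar>p\<bar> ^ (nat c * k)" using P1 by simp
  have "\<bar>(of_int p :: rat) powi s\<bar> = (of_int \<bar>p\<bar>) powi s" by (simp add: power_int_abs)
  also have "\<dots> \<le> of_int \<bar>p\<bar> ^ (nat c * k)"
  proof (cases "s \<ge> 0")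
    case True
    then obtain j where j: "s = int j" by (metis nonneg_eq_int)
    have "j \<le> nat c * k" using assms(3) j assms(2) by (simp add: nat_mult_distrib) (metis nat_int nat_mono nat_mult_distrib of_nat_0_le_iff assms(2))
    then show ?thesis using j P1 by (simp add: power_increasing)
  next
    case False
    then obtain j where j: "s = - int j" by (metis add.inverse_inverse less_le nat_0_le neg_0_le_iff_le not_le)
    have "(of_int \<bar>p\<bar> :: rat) powi s = inverse (of_int \<bar>p\<bar> ^ j)" using j by (simp add: power_int_minus)
    also have "\<dots> \<le> 1" using P1 by (simp add: inverse_le_1_iff one_le_power)
    finally show ?thesis using ge1 by linarith
  qed
  finally show ?thesis using rhs by simp
qed

lemma SS_bound:
  assumes "\<forall>x\<in>C. \<bar>snd x\<bar> \<le> c" "set zs \<subseteq> C"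
  shows "\<bar>SS zs\<bar> \<le> c * int (length zs)"
  using assms(2)
proof (induction zs)
  case Nil then show ?case by simp
next
  case (Cons x zs)
  then have "\<bar>snd x\<bar> \<le> c" using assms(1) by auto
  then show ?case using Cons by (simp add: algebra_simps)
qed

lemma L1:
  assumes p: "\<bar>p\<bar> > 1" and c: "c \<ge> 1" and hc: "\<forall>x\<in>C. \<bar>snd x\<bar> \<le> c"
    and hA: "\<forall>x\<in>C. \<bar>fst x\<bar> \<le> A" and A: "A \<ge> 0"
    and q: "q = (of_int \<bar>p\<bar> ^ nat c :: rat)"
  shows "set ys \<subseteq> C \<Longrightarrow> \<bar>FF p ys\<bar> \<le> A * (2 * q ^ length ys - 1)"
proof (induction ys)
  case Nil then show ?case using A by simp
next
  case (Cons x ys)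
  have x: "\<bar>snd x\<bar> \<le> c" "\<bar>fst x\<bar> \<le> A" using Cons.prems hc hA by auto
  have q2: "q \<ge> 2"
  proof -
    have "(2::rat) \<le> of_int \<bar>p\<bar>" using p by simp
    also have "\<dots> \<le> of_int \<bar>p\<bar> ^ nat c" using p c by (simp add: self_le_power)
    finally show ?thesis using q by simp
  qed
  have pw: "\<bar>(of_int p :: rat) powi (- snd x)\<bar> \<le> q"
    using powi_bound[of p c "- snd x" 1] p c x q by simp
  have IH: "\<bar>FF p ys\<bar> \<le> A * (2 * q ^ length ys - 1)" using Cons by auto
  have "\<bar>(of_int p :: rat) powi (- snd x) * FF p ys\<bar> \<le> q * (A * (2 * q ^ length ys - 1))"
    unfolding abs_mult by (rule mult_mono[OF pw IH]) (use q2 in auto)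
  moreover have "2 * A \<le> q * A" using q2 A by (simp add: mult_right_mono)
  ultimately have "\<bar>FF p (x # ys)\<bar> \<le> A + q * (A * (2 * q ^ length ys - 1))"
    using x by (simp add: abs_triangle_ineq order_trans[OF abs_triangle_ineq])
  also have "\<dots> \<le> A * (2 * q ^ length (x # ys) - 1)"
    using \<open>2 * A \<le> q * A\<close> by (simp add: algebra_simps)
  finally show ?case .
qed

lemma L2:
  assumes p: "\<bar>p\<bar> > 1" and c: "c \<ge> 1" and hc: "\<forall>x\<in>C. \<bar>snd x\<bar> \<le> c"
    and hA: "\<forall>x\<in>C. \<bar>fst x\<bar> \<le> A" and A: "A \<ge> 0"
    and q: "q = (of_int \<bar>p\<bar> ^ nat c :: rat)"
  shows "set zs \<subseteq> C \<Longrightarrow> \<bar>(of_int p) powi (SS zs) * FF p zs\<bar> \<le> A * (2 * q ^ length zs - 1)"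
proof (induction zs)
  case Nil then show ?case using A by simp
next
  case (Cons x zs)
  have x: "\<bar>snd x\<bar> \<le> c" "\<bar>fst x\<bar> \<le> A" using Cons.prems hc hA by auto
  have q2: "q \<ge> 2"
  proof -
    have "(2::rat) \<le> of_int \<bar>p\<bar>" using p by simp
    also have "\<dots> \<le> of_int \<bar>p\<bar> ^ nat c" using p c by (simp add: self_le_power)
    finally show ?thesis using q by simp
  qed
  have p0: "(of_int p :: rat) \<noteq> 0" using p by auto
  have S: "\<bar>SS (x # zs)\<bar> \<le> c * int (length (x # zs))" using SS_bound[OF hc Cons.prems] .
  have pw: "\<bar>(of_int p :: rat) powi (SS (x # zs))\<bar> \<le> q ^ length (x # zs)"
    using powi_bound[OF p _ S] c q by simp
  have IH: "\<bar>(of_int p) powi (SS zs) * FF p zs\<bar> \<le> A * (2 * q ^ length zs - 1)" using Cons by auto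
  have eq: "(of_int p :: rat) powi (SS (x # zs)) * FF p (x # zs)
      = (of_int p) powi (SS (x # zs)) * fst x + (of_int p) powi (SS zs) * FF p zs"
  proof -
    have "(of_int p :: rat) powi (SS (x # zs)) * (of_int p) powi (- snd x) = (of_int p) powi (SS zs)"
      using p0 by (simp add: power_int_add[symmetric])
    then show ?thesis by (simp add: algebra_simps)
  qed
  have t1: "\<bar>(of_int p :: rat) powi (SS (x # zs)) * fst x\<bar> \<le> q ^ length (x # zs) * A"
    unfolding abs_mult by (rule mult_mono[OF pw x(2)]) (use q2 in auto)
  have "2 * q ^ length zs \<le> q * q ^ length zs" using q2 by (simp add: mult_right_mono)
  then have "2 * A * q ^ length zs \<le> A * q * q ^ length zs" using A
    by (metis mult.assoc mult.commute mult_left_mono)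
  then show ?case unfolding eq
    using t1 IH abs_triangle_ineq[of "(of_int p :: rat) powi (SS (x # zs)) * fst x" "(of_int p) powi (SS zs) * FF p zs"]
    by (simp add: algebra_simps)
qed

lemma R1:
  assumes p: "\<bar>p\<bar> > 1" and c: "c \<ge> 1" and hc: "\<forall>x\<in>C. \<bar>snd x\<bar> \<le> c"
    and hE: "\<forall>x\<in>C. rep p E (fst x)"
  shows "set ys \<subseteq> C \<Longrightarrow> rep p (E + nat c * length ys) (FF p ys)"
proof (induction ys)
  case Nil then show ?case by (simp add: rep_def)
next
  case (Cons x ys)
  have p0: "p \<noteq> 0" using p by auto
  have x: "\<bar>snd x\<bar> \<le> c" "rep p E (fst x)" using Cons.prems hc hE by auto
  have IH: "rep p (E + nat c * length ys) (FF p ys)" using Cons by auto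
  have "rep p (E + nat c * length ys + nat (- (- snd x))) ((of_int p) powi (- snd x) * FF p ys)"
    by (rule rep_powi[OF p0 IH])
  moreover have "E + nat c * length ys + nat (- (- snd x)) \<le> E + nat c * length (x # ys)"
    using x(1) by simp
  ultimately have a: "rep p (E + nat c * length (x # ys)) ((of_int p) powi (- snd x) * FF p ys)"
    using rep_mono[OF p0] by blast
  have b: "rep p (E + nat c * length (x # ys)) (fst x)" using rep_mono[OF p0 x(2)] by simp
  show ?case using rep_add[OF b a] by simp
qed

lemma R2:
  assumes p: "\<bar>p\<bar> > 1" and c: "c \<ge> 1" and hc: "\<forall>x\<in>C. \<bar>snd x\<bar> \<le> c"
    and hE: "\<forall>x\<in>C. rep p E (fst x)"
  shows "set zs \<subseteq> C \<Longrightarrow> rep p (E + nat c * length zs) ((of_int p) powi (SS zs) * FF p zs)"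
proof (induction zs)
  case Nil then show ?case by (simp add: rep_def)
next
  case (Cons x zs)
  have p0: "p \<noteq> 0" using p by auto
  have x: "\<bar>snd x\<bar> \<le> c" "rep p E (fst x)" using Cons.prems hc hE by auto
  have IH: "rep p (E + nat c * length zs) ((of_int p) powi (SS zs) * FF p zs)" using Cons by auto
  have S: "\<bar>SS (x # zs)\<bar> \<le> c * int (length (x # zs))" using SS_bound[OF hc Cons.prems] .
  have eq: "(of_int p :: rat) powi (SS (x # zs)) * FF p (x # zs)
      = (of_int p) powi (SS (x # zs)) * fst x + (of_int p) powi (SS zs) * FF p zs"
  proof -
    have "(of_int p :: rat) powi (SS (x # zs)) * (of_int p) powi (- snd x) = (of_int p) powi (SS zs)"
      using p0 by (simp add: power_int_add[symmetric])
    then show ?thesis by (simp add: algebra_simps)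
  qed
  have "rep p (E + nat (- SS (x # zs))) ((of_int p) powi (SS (x # zs)) * fst x)"
    by (rule rep_powi[OF p0 x(2)])
  moreover have "E + nat (- SS (x # zs)) \<le> E + nat c * length (x # zs)"
  proof -
    have "- SS (x # zs) \<le> c * int (length (x # zs))" using S by linarith
    then have "nat (- SS (x # zs)) \<le> nat (c * int (length (x # zs)))" by (rule nat_mono)
    also have "\<dots> = nat c * length (x # zs)" using c by (simp add: nat_mult_distrib nat_add_distrib)
    finally show ?thesis by simp
  qed
  ultimately have a: "rep p (E + nat c * length (x # zs)) ((of_int p) powi (SS (x # zs)) * fst x)"
    using rep_mono[OF p0] by blast
  have b: "rep p (E + nat c * length (x # zs)) ((of_int p) powi (SS zs) * FF p zs)"
    using rep_mono[OF p0 IH] by simp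
  show ?case unfolding eq using rep_add[OF a b] .
qed


lemma denomp_rep: "denomp p f = \<bar>p\<bar> ^ (LEAST n. rep p n f)"
  by (simp add: denomp_def rep_def)

lemma denom_aux:
  assumes p: "\<bar>p\<bar> > 1" and f: "\<exists>n. rep p n f" and f': "\<exists>n. rep p n f'"
    and g: "rep p N (f' - f)"
    and lt: "(LEAST n. rep p n f) < (LEAST n. rep p n f')"
  shows "(LEAST n. rep p n f') \<le> N"
proof -
  have p0: "p \<noteq> 0" using p by auto
  define a where "a = (LEAST n. rep p n f)"
  define b where "b = (LEAST n. rep p n f')"
  have ra: "rep p a f" unfolding a_def using f by (rule LeastI_ex)
  have "rep p (max a N) f" using rep_mono[OF p0 ra] by simp
  moreover have "rep p (max a N) (f' - f)" using rep_mono[OF p0 g] by simp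
  ultimately have "rep p (max a N) f'" using rep_add by fastforce
  then have "b \<le> max a N" unfolding b_def by (rule Least_le)
  then show ?thesis using lt unfolding a_def[symmetric] b_def[symmetric] by linarith
qed

lemma denom_diff:
  assumes p: "\<bar>p\<bar> > 1" and f: "f \<in> Zinvp p" and f': "f' \<in> Zinvp p"
    and g: "rep p N (f' - f)"
  shows "\<bar>denomp p f - denomp p f'\<bar> \<le> \<bar>p\<bar> ^ N"
proof -
  have F: "\<exists>n. rep p n f" and F': "\<exists>n. rep p n f'" using f f' Zinvp_rep by auto
  have g': "rep p N (f - f')" using rep_uminus[OF g] by simp
  define a where "a = (LEAST n. rep p n f)"
  define b where "b = (LEAST n. rep p n f')"
  have pos: "\<And>k. (0::int) < \<bar>p\<bar> ^ k" using p by (auto simp del: zero_less_power_abs_iff intro: zero_less_power)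
  have mono: "\<And>k l. k \<le> l \<Longrightarrow> \<bar>p\<bar> ^ k \<le> \<bar>p\<bar> ^ l" using p by (simp add: power_increasing)
  consider "a < b" | "a = b" | "b < a" by linarith
  then show ?thesis
  proof cases
    case 1
    then have "b \<le> N" using denom_aux[OF p F F' g] unfolding a_def b_def by blast
    then have "\<bar>p\<bar> ^ b \<le> \<bar>p\<bar> ^ N" by (rule mono)
    moreover have "\<bar>p\<bar> ^ a \<le> \<bar>p\<bar> ^ b" using 1 mono by simp
    ultimately show ?thesis unfolding denomp_rep a_def[symmetric] b_def[symmetric]
      using pos[of a] pos[of b] by linarith
  next
    case 2 then show ?thesis unfolding denomp_rep a_def[symmetric] b_def[symmetric]
      using pos[of N] by simp
  next
    case 3
    then have "a \<le> N" using denom_aux[OF p F' F g'] unfolding a_def b_def by blast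
    then have "\<bar>p\<bar> ^ a \<le> \<bar>p\<bar> ^ N" by (rule mono)
    moreover have "\<bar>p\<bar> ^ b \<le> \<bar>p\<bar> ^ a" using 3 mono by simp
    ultimately show ?thesis unfolding denomp_rep a_def[symmetric] b_def[symmetric]
      using pos[of a] pos[of b] by linarith
  qed
qed


lemma SS_zero: "\<forall>x\<in>set xs. snd x = 0 \<Longrightarrow> SS xs = 0"
  by (induction xs) auto

theorem lemma2:
  fixes p :: int and C :: "(rat \<times> int) set"
  assumes "\<bar>p\<bar> > 1"
    and "finite C"
    and "C \<subseteq> BScarrier p"
    and "\<forall>x \<in> C. BSinv p x \<in> C"
    and "BSgenerates p C"
  shows "\<exists>M::real. \<forall>r::real. r \<ge> 0 \<longrightarrow>
           (\<forall>f \<in> Zinvp p. \<forall>f' \<in> Zinvp p.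
              real (word_dist p C (f, 0) (f', 0)) \<le> r \<longrightarrow>
                \<bar>\<bar>real_of_rat f\<bar> - \<bar>real_of_rat f'\<bar>\<bar>
                   \<le> M * real_of_int \<bar>p\<bar> powr (r * real_of_int (Max (snd ` C)) / 2)
                \<and> \<bar>real_of_int (denomp p f) - real_of_int (denomp p f')\<bar>
                   \<le> M * real_of_int \<bar>p\<bar> powr (r * real_of_int (Max (snd ` C)) / 2))"
proof -
  note p = assms(1)
  have p0: "p \<noteq> 0" using p by auto
  have gen: "\<And>g. g \<in> BScarrier p \<Longrightarrow> \<exists>xs. set xs \<subseteq> C \<and> BSprod p xs = g"
    using assms(5) unfolding BSgenerates_def by blast
  have "(0::rat, 1::int) \<in> BScarrier p"
    unfolding BScarrier_def Zinvp_def by (auto intro: exI[of _ 0])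
  then obtain xs1 where xs1: "set xs1 \<subseteq> C" "BSprod p xs1 = (0, 1)" using gen by blast
  have S1: "SS xs1 = 1" using xs1(2) BSprod_FF[of p xs1] by simp
  obtain x1 where x1: "x1 \<in> set xs1" "snd x1 \<noteq> 0"
    using SS_zero[of xs1] S1 by (metis zero_neq_one)
  have x1C: "x1 \<in> C" using x1 xs1 by auto
  have Cne: "C \<noteq> {}" using x1C by auto
  define c where "c = Max (snd ` C)"
  have hc: "\<forall>x\<in>C. \<bar>snd x\<bar> \<le> c"
  proof
    fix x assume x: "x \<in> C"
    have "snd x \<le> c" unfolding c_def using x assms(2) by auto
    moreover have "snd (BSinv p x) \<le> c" unfolding c_def using x assms(2,4) by auto
    ultimately show "\<bar>snd x\<bar> \<le> c" by (simp add: BSinv_def)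
  qed
  have "\<bar>snd x1\<bar> \<le> c" using hc x1C by blast
  moreover have "1 \<le> \<bar>snd x1\<bar>" using x1(2) by (simp add: abs_if)
  ultimately have c1: "c \<ge> 1" by linarith
  define A where "A = Max ((\<lambda>x. \<bar>fst x\<bar>) ` C)"
  have hA: "\<forall>x\<in>C. \<bar>fst x\<bar> \<le> A" unfolding A_def using assms(2) by auto
  have "\<bar>fst x1\<bar> \<le> A" using hA x1C by blast
  then have A0: "A \<ge> 0" using abs_ge_zero[of "fst x1"] by linarith
  define E where "E = Max ((\<lambda>x. LEAST n. rep p n (fst x)) ` C)"
  have hE: "\<forall>x\<in>C. rep p E (fst x)"
  proof
    fix x assume x: "x \<in> C"
    have "fst x \<in> Zinvp p" using x assms(3) unfolding BScarrier_def by auto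
    then have "\<exists>n. rep p n (fst x)" using Zinvp_rep by auto
    then have "rep p (LEAST n. rep p n (fst x)) (fst x)" by (rule LeastI_ex)
    moreover have "(LEAST n. rep p n (fst x)) \<le> E" unfolding E_def using x assms(2) by auto
    ultimately show "rep p E (fst x)" using rep_mono[OF p0] by blast
  qed
  define q where "q = (of_int \<bar>p\<bar> ^ nat c :: rat)"
  define P where "P = real_of_int \<bar>p\<bar>"
  have P1: "P \<ge> 1" unfolding P_def using p by simp
  define M where "M = 4 * real_of_rat A * P powr (real_of_int c / 2) + P ^ E * P powr (real_of_int c / 2)"
  have q1: "q \<ge> 1" unfolding q_def using p by simp
  show ?thesis unfolding c_def[symmetric] P_def[symmetric]
  proof (intro exI[of _ M] allI impI ballI)
    fix r :: real and f f' assume r: "r \<ge> 0" and f: "f \<in> Zinvp p" and f': "f' \<in> Zinvp p"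
      and d: "real (word_dist p C (f, 0) (f', 0)) \<le> r"
    have g: "BSmult p (BSinv p (f, 0)) (f', 0) = (f' - f, 0)" by (simp add: BSmult_def BSinv_def)
    have "f' - f \<in> Zinvp p"
    proof -
      obtain n1 n2 where "rep p n1 f" "rep p n2 f'" using f f' Zinvp_rep by blast
      then have "rep p (max n1 n2) f" "rep p (max n1 n2) f'" using rep_mono[OF p0] by auto
      then have "rep p (max n1 n2) (f' + - f)" using rep_add rep_uminus by blast
      then show ?thesis using Zinvp_rep by auto
    qed
    then obtain xs0 where xs0: "set xs0 \<subseteq> C" "BSprod p xs0 = (f' - f, 0)"
      using gen unfolding BScarrier_def by blast
    define n where "n = word_dist p C (f, 0) (f', 0)"
    have "\<exists>xs. length xs = n \<and> set xs \<subseteq> C \<and> BSprod p xs = (f' - f, 0)"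
      unfolding n_def word_dist_def g
      by (rule LeastI_ex) (use xs0 in blast)
    then obtain xs where xs: "length xs = n" "set xs \<subseteq> C" "BSprod p xs = (f' - f, 0)" by blast
    have FFxs: "FF p xs = f' - f" and SSxs: "SS xs = 0" using xs(3) BSprod_FF[of p xs] by auto
    define ys where "ys = take (n div 2) xs"
    define zs where "zs = drop (n div 2) xs"
    define k where "k = n - n div 2"
    have xyz: "xs = ys @ zs" unfolding ys_def zs_def by simp
    have ysC: "set ys \<subseteq> C" unfolding ys_def by (rule order_trans[OF set_take_subset xs(2)])
    have zsC: "set zs \<subseteq> C" unfolding zs_def by (rule order_trans[OF set_drop_subset xs(2)])
    have lys: "length ys \<le> k" unfolding ys_def k_def using xs(1) by simp
    have lzs: "length zs = k" unfolding zs_def k_def using xs(1) by simp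
    have "SS ys + SS zs = 0" using SSxs xyz by simp
    then have mS: "- SS ys = SS zs" by linarith
    have split: "f' - f = FF p ys + (of_int p) powi (SS zs) * FF p zs"
      using FFxs FF_append[OF p0, of ys zs] xyz mS by simp
    have b1: "\<bar>FF p ys\<bar> \<le> A * (2 * q ^ length ys - 1)"
      using L1[OF p c1 hc hA A0 q_def ysC] .
    have b2: "\<bar>(of_int p) powi (SS zs) * FF p zs\<bar> \<le> A * (2 * q ^ k - 1)"
      using L2[OF p c1 hc hA A0 q_def zsC] lzs by simp
    have qq: "q ^ length ys \<le> q ^ k" using q1 lys by (simp add: power_increasing)
    have "\<bar>f' - f\<bar> \<le> A * (2 * q ^ length ys - 1) + A * (2 * q ^ k - 1)"
      using split b1 b2 abs_triangle_ineq[of "FF p ys" "(of_int p) powi (SS zs) * FF p zs"] by linarith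
    also have "\<dots> \<le> 4 * A * q ^ k"
    proof -
      have "A * q ^ length ys \<le> A * q ^ k" using qq A0 by (simp add: mult_left_mono)
      then show ?thesis using A0 by (simp add: algebra_simps)
    qed
    finally have absb: "\<bar>f' - f\<bar> \<le> 4 * A * q ^ k" .
    have r1: "rep p (E + nat c * length ys) (FF p ys)" using R1[OF p c1 hc hE ysC] .
    have r2: "rep p (E + nat c * k) ((of_int p) powi (SS zs) * FF p zs)"
      using R2[OF p c1 hc hE zsC] lzs by simp
    have "rep p (E + nat c * k) (FF p ys)"
      using rep_mono[OF p0 r1] lys by (simp add: mult_left_mono)
    then have repg: "rep p (E + nat c * k) (f' - f)" using split rep_add[OF _ r2] by simp
    have den: "\<bar>denomp p f - denomp p f'\<bar> \<le> \<bar>p\<bar> ^ (E + nat c * k)"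
      using denom_diff[OF p f f' repg] .
    have P0: "P > 0" using P1 by simp
    have rn: "real n \<le> r" using d unfolding n_def by simp
    have "2 * k \<le> n + 1" unfolding k_def by simp
    then have "real (2 * k) \<le> real (n + 1)" by (simp only: of_nat_le_iff)
    then have kb: "real k \<le> (r + 1) / 2" using rn by simp
    have Qk: "real_of_rat (q ^ k) = P powr (real_of_int c * real k)"
    proof -
      have "real_of_rat (q ^ k) = P ^ (nat c * k)" unfolding q_def P_def
        by (simp del: of_int_abs add: of_rat_power power_mult)
      also have "\<dots> = P powr (real (nat c * k))" using P0 by (simp only: powr_realpow)
      also have "real (nat c * k) = real_of_int c * real k" using c1 by simp
      finally show ?thesis .
    qed
    have Qb: "P powr (real_of_int c * real k) \<le> P powr (real_of_int c / 2) * P powr (r * real_of_int c / 2)"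
    proof -
      have "real_of_int c * real k \<le> real_of_int c * ((r + 1) / 2)"
        using kb c1 by (simp add: mult_left_mono)
      also have "\<dots> = real_of_int c / 2 + r * real_of_int c / 2" by (simp add: field_simps)
      finally have "P powr (real_of_int c * real k) \<le> P powr (real_of_int c / 2 + r * real_of_int c / 2)"
        using P1 by (simp add: powr_mono)
      then show ?thesis by (simp add: powr_add)
    qed
    have Pk: "P powr (real_of_int c * real k) \<ge> 0" by simp
    have Rpos: "P powr (r * real_of_int c / 2) \<ge> 0" by simp
    have M2pos: "P ^ E * P powr (real_of_int c / 2) \<ge> 0" using P0 by simp
    have M1pos: "4 * real_of_rat A * P powr (real_of_int c / 2) \<ge> 0" using A0 by simp
    have "\<bar>\<bar>real_of_rat f\<bar> - \<bar>real_of_rat f'\<bar>\<bar> \<le> \<bar>real_of_rat (f' - f)\<bar>"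
      using abs_triangle_ineq3[of "real_of_rat f" "real_of_rat f'"] by (simp add: of_rat_diff abs_minus_commute)
    also have "\<dots> = real_of_rat \<bar>f' - f\<bar>" by simp
    also have "\<dots> \<le> real_of_rat (4 * A * q ^ k)" using absb of_rat_less_eq by blast
    also have "\<dots> = 4 * real_of_rat A * P powr (real_of_int c * real k)"
      using Qk by (simp add: of_rat_mult)
    also have "\<dots> \<le> 4 * real_of_rat A * (P powr (real_of_int c / 2) * P powr (r * real_of_int c / 2))"
      using Qb A0 by (simp add: mult_left_mono)
    also have "\<dots> \<le> M * P powr (r * real_of_int c / 2)"
      unfolding M_def using mult_nonneg_nonneg[OF M2pos Rpos] by (simp add: algebra_simps)
    finally have part1: "\<bar>\<bar>real_of_rat f\<bar> - \<bar>real_of_rat f'\<bar>\<bar> \<le> M * P powr (r * real_of_int c / 2)" .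
    have "\<bar>real_of_int (denomp p f) - real_of_int (denomp p f')\<bar> \<le> real_of_int (\<bar>p\<bar> ^ (E + nat c * k))"
    proof -
      have "real_of_int \<bar>denomp p f - denomp p f'\<bar> \<le> real_of_int (\<bar>p\<bar> ^ (E + nat c * k))"
        using den by (simp only: of_int_le_iff)
      then show ?thesis by simp
    qed
    also have "\<dots> = P ^ E * P powr (real_of_int c * real k)"
    proof -
      have "real_of_int (\<bar>p\<bar> ^ (E + nat c * k)) = P ^ E * P ^ (nat c * k)" unfolding P_def
        by (simp add: power_add)
      also have "P ^ (nat c * k) = P powr (real (nat c * k))" using P0 by (simp only: powr_realpow)
      also have "real (nat c * k) = real_of_int c * real k" using c1 by simp
      finally show ?thesis .
    qed
    also have "\<dots> \<le> P ^ E * (P powr (real_of_int c / 2) * P powr (r * real_of_int c / 2))"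
      using Qb P0 by (simp add: mult_left_mono)
    also have "\<dots> \<le> M * P powr (r * real_of_int c / 2)"
      unfolding M_def using mult_nonneg_nonneg[OF M1pos Rpos] by (simp add: algebra_simps)
    finally show "\<bar>\<bar>real_of_rat f\<bar> - \<bar>real_of_rat f'\<bar>\<bar> \<le> M * P powr (r * real_of_int c / 2) \<and>
       \<bar>real_of_int (denomp p f) - real_of_int (denomp p f')\<bar> \<le> M * P powr (r * real_of_int c / 2)"
      using part1 by blast
  qed
qed

end
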